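(* Let $0<\bar C\le1$, $\epsilon>0$, $\omega\ge0$, $\gamma_0\ge\gamma\ge0$. Let $\omega(t),\epsilon_x(t),\epsilon_y(t),\delta\gamma_t$ be real-valued functions of time with $|\omega(t)|\le\omega$, $\sqrt{\epsilon_x^2(t)+\epsilon_y^2(t)}\le\epsilon$, $|\delta\gamma_t|\le\gamma$, and set $H(t)=[1+\omega(t)]I_z+\epsilon_x(t)I_x+\epsilon_y(t)I_y$, $\gamma_t=\gamma_0+\delta\gamma_t$. Let the qubit density matrix $\rho_t$ evolve according to $$\dot\rho_t=-i[H(t),\rho_t]+\gamma_t(\sigma_z\rho_t\sigma_z-\rho_t)$$ from an initial state $\rho_0$ with $C_0=[\mathrm{tr}(\rho_0\sigma_x)]^2+[\mathrm{tr}(\rho_0\sigma_y)]^2=1$. Define $$T_p=\begin{cases}\dfrac{1-\bar C}{4\sqrt2(\gamma_0+\gamma)}, & \text{if } 4(\gamma_0+\gamma)^2\ge\epsilon^2,\\[2mm] \dfrac{(1-\bar C)\sqrt{\epsilon^2-2(\gamma_0+\gamma)^2}}{2\epsilon^2}, & \text{if } 4(\gamma_0+\gamma)^2<\epsilon^2.\end{cases}$$ Then for every $t\in[0,T_p]$, $\rho_t\in\mathcal{D}_p=\{\rho:[\mathrm{tr}(\rho\sigma_x)]^2+[\mathrm{tr}(\rho\sigma_y)]^2\ge\bar C\}$. Consequently, if projective measurements of $\sigma_x$ are performed periodically with period $T_p$, the state remains in $\mathcal{D}_p$.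
   Context: $\sigma_x,\sigma_y,\sigma_z$ are the Pauli matrices $\begin{pmatrix}0&1\\1&0\end{pmatrix},\begin{pmatrix}0&-i\\i&0\end{pmatrix},\begin{pmatrix}1&0\\0&-1\end{pmatrix}$, $I_j=\frac12\sigma_j$, $[A,B]=AB-BA$, units with $\hbar=1$. The coherence of a qubit state $\rho$ is $C=x^2+y^2$ with $x=\mathrm{tr}(\rho\sigma_x)$, $y=\mathrm{tr}(\rho\sigma_y)$. *)

theory Defs
  imports "HOL-Analysis.Analysis"
begin

type_synonym cmat2 = "complex^2^2"

definition mat2 :: "complex \<Rightarrow> complex \<Rightarrow> complex \<Rightarrow> complex \<Rightarrow> cmat2" where
  "mat2 a b c d = (\<chi> i j. if i = 1 then (if j = 1 then a else b) else (if j = 1 then c else d))"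

definition sigma_x :: cmat2 where "sigma_x = mat2 0 1 1 0"
definition sigma_y :: cmat2 where "sigma_y = mat2 0 (- \<i>) \<i> 0"
definition sigma_z :: cmat2 where "sigma_z = mat2 1 0 0 (-1)"

definition I_x :: cmat2 where "I_x = (1/2) *\<^sub>R sigma_x"
definition I_y :: cmat2 where "I_y = (1/2) *\<^sub>R sigma_y"
definition I_z :: cmat2 where "I_z = (1/2) *\<^sub>R sigma_z"

definition cscale :: "complex \<Rightarrow> cmat2 \<Rightarrow> cmat2" where
  "cscale c A = (\<chi> i j. c * A $ i $ j)"

definition commutator :: "cmat2 \<Rightarrow> cmat2 \<Rightarrow> cmat2" where
  "commutator A B = A ** B - B ** A"

definition adjoint2 :: "cmat2 \<Rightarrow> cmat2" where
  "adjoint2 A = (\<chi> i j. cnj (A $ j $ i))"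

definition density :: "cmat2 \<Rightarrow> bool" where
  "density \<rho> \<longleftrightarrow> adjoint2 \<rho> = \<rho>
     \<and> (\<forall>v :: complex^2. 0 \<le> Re (\<Sum>i\<in>UNIV. \<Sum>j\<in>UNIV. cnj (v $ i) * \<rho> $ i $ j * v $ j))
     \<and> trace \<rho> = 1"

definition bloch_x :: "cmat2 \<Rightarrow> real" where "bloch_x \<rho> = Re (trace (\<rho> ** sigma_x))"
definition bloch_y :: "cmat2 \<Rightarrow> real" where "bloch_y \<rho> = Re (trace (\<rho> ** sigma_y))"

definition coherence :: "cmat2 \<Rightarrow> real" where
  "coherence \<rho> = (bloch_x \<rho>)\<^sup>2 + (bloch_y \<rho>)\<^sup>2"

definition D_p :: "real \<Rightarrow> cmat2 set" where
  "D_p Cbar = {\<rho>. coherence \<rho> \<ge> Cbar}"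

definition T_p :: "real \<Rightarrow> real \<Rightarrow> real \<Rightarrow> real \<Rightarrow> real" where
  "T_p Cbar eps g0 g =
     (if 4 * (g0 + g)\<^sup>2 \<ge> eps\<^sup>2 then (1 - Cbar) / (4 * sqrt 2 * (g0 + g))
      else (1 - Cbar) * sqrt (eps\<^sup>2 - 2 * (g0 + g)\<^sup>2) / (2 * eps\<^sup>2))"

definition Ham :: "real \<Rightarrow> real \<Rightarrow> real \<Rightarrow> cmat2" where
  "Ham w ex ey = (1 + w) *\<^sub>R I_z + ex *\<^sub>R I_x + ey *\<^sub>R I_y"

end

theory Submission
  imports Defs
begin

lemma bl_entry: "bounded_linear (\<lambda>A::complex^2^2. Re (A $ i $ j))" "bounded_linear (\<lambda>A::complex^2^2. Im (A $ i $ j))"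
  by (intro bounded_linear_compose[OF bounded_linear_Re] bounded_linear_compose[OF bounded_linear_Im]
      bounded_linear_vec_nth bounded_linear_compose[OF bounded_linear_vec_nth])+

lemma entry_deriv:
  fixes \<rho> :: "real \<Rightarrow> complex^2^2"
  assumes "(\<rho> has_vector_derivative D) (at t within S)"
  shows "((\<lambda>t. Re (\<rho> t $ i $ j)) has_real_derivative Re (D $ i $ j)) (at t within S)"
    "((\<lambda>t. Im (\<rho> t $ i $ j)) has_real_derivative Im (D $ i $ j)) (at t within S)"
proof -
  have "((\<lambda>t. Re (\<rho> t $ i $ j)) has_derivative (\<lambda>h. Re ((h *\<^sub>R D) $ i $ j))) (at t within S)"
    using bounded_linear.has_derivative[OF bl_entry(1) assms[unfolded has_vector_derivative_def]] .
  then show "((\<lambda>t. Re (\<rho> t $ i $ j)) has_real_derivative Re (D $ i $ j)) (at t within S)"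
    by (simp add: has_field_derivative_def mult_commute_abs)
  have "((\<lambda>t. Im (\<rho> t $ i $ j)) has_derivative (\<lambda>h. Im ((h *\<^sub>R D) $ i $ j))) (at t within S)"
    using bounded_linear.has_derivative[OF bl_entry(2) assms[unfolded has_vector_derivative_def]] .
  then show "((\<lambda>t. Im (\<rho> t $ i $ j)) has_real_derivative Im (D $ i $ j)) (at t within S)"
    by (simp add: has_field_derivative_def mult_commute_abs)
qed

lemma entries: fixes A :: "complex^2^2" and w ex ey g :: real
  defines "D \<equiv> cscale (- \<i>) (commutator (Ham w ex ey) A) + g *\<^sub>R (sigma_z ** A ** sigma_z - A)"
  shows "Re (D $ 1 $ 2) + Re (D $ 2 $ 1) = -(1+w) * (Im (A$2$1) - Im (A$1$2)) + ey * (Re (A$1$1) - Re (A$2$2)) - 2*g*(Re (A$1$2) + Re (A$2$1))"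
    "Im (D $ 2 $ 1) - Im (D $ 1 $ 2) = (1+w) * (Re (A$1$2) + Re (A$2$1)) - ex * (Re (A$1$1) - Re (A$2$2)) - 2*g*(Im (A$2$1) - Im (A$1$2))"
    "Re (D $ 1 $ 1) - Re (D $ 2 $ 2) = ex * (Im (A$2$1) - Im (A$1$2)) - ey * (Re (A$1$2) + Re (A$2$1))"
  unfolding D_def cscale_def commutator_def Ham_def I_x_def I_y_def I_z_def sigma_x_def sigma_y_def sigma_z_def mat2_def
  apply (simp_all add: matrix_matrix_mult_def sum_2 algebra_simps)
  apply (simp_all add: field_simps)
  done


lemma key_ineq:
  fixes Z W C e g G :: real
  assumes "Z^2 + C \<le> 1" "W^2 \<le> e^2 * C" "C \<ge> 0" "0 \<le> g" "g \<le> G" "e \<ge> 0"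
  shows "2*Z*W - 4*g*C \<ge> -(2*G + sqrt(e^2+4*G^2))"
proof -
  define q where "q = sqrt C"
  define p where "p = \<bar>Z\<bar>"
  define s where "s = sqrt(e^2+4*G^2)"
  have q0: "q \<ge> 0" and qC: "q^2 = C" using assms by (auto simp: q_def)
  have p0: "p \<ge> 0" and pZ: "p^2 = Z^2" by (auto simp: p_def)
  have G0: "G \<ge> 0" using assms by linarith
  have s0: "s \<ge> 0" and s2: "s^2 = e^2 + 4*G^2" by (auto simp: s_def)
  have "W^2 \<le> (e*q)^2" using assms(2) qC by (simp add: power_mult_distrib)
  hence Wle: "\<bar>W\<bar> \<le> e*q" using abs_le_square_iff[of W "e*q"] assms(6) q0 by simp
  have "2*\<bar>Z\<bar>*\<bar>W\<bar> \<le> 2*p*(e*q)" using Wle p0 by (simp add: p_def mult_left_mono)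
  hence h1: "-(2*Z*W) \<le> 2*e*p*q"
  proof -
    have "-(2*Z*W) \<le> \<bar>2*Z*W\<bar>" by (rule abs_ge_minus_self)
    also have "\<bar>2*Z*W\<bar> = 2*\<bar>Z\<bar>*\<bar>W\<bar>" by (simp add: abs_mult)
    finally show ?thesis using \<open>2*\<bar>Z\<bar>*\<bar>W\<bar> \<le> 2*p*(e*q)\<close> by (simp add: algebra_simps)
  qed
  have h2: "4*g*C \<le> 4*G*q^2" using assms qC by (simp add: mult_right_mono)
  have pq1: "p^2 + q^2 \<le> 1" using assms(1) pZ qC by simp
  have quad: "2*e*p*q + 2*G*(q^2 - p^2) \<le> s*(p^2+q^2)"
  proof (cases "s + 2*G = 0")
    case True
    then have "G = 0" "s = 0" using G0 s0 by auto
    then have "e = 0" using s2 by simp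
    then show ?thesis using \<open>G = 0\<close> \<open>s = 0\<close> by simp
  next
    case False
    then have pos: "s + 2*G > 0" using G0 s0 by linarith
    have "(s+2*G) * (s*(p^2+q^2) - 2*e*p*q - 2*G*(q^2 - p^2)) = ((s+2*G)*p - e*q)^2 + (s^2 - 4*G^2 - e^2)*q^2"
      by (simp add: power2_eq_square algebra_simps)
    also have "\<dots> = ((s+2*G)*p - e*q)^2" using s2 by simp
    finally have "(s+2*G) * (s*(p^2+q^2) - 2*e*p*q - 2*G*(q^2 - p^2)) \<ge> 0" by simp
    then have "s*(p^2+q^2) - 2*e*p*q - 2*G*(q^2 - p^2) \<ge> 0" using pos
      by (simp add: zero_le_mult_iff)
    then show ?thesis by simp
  qed
  have "2*e*p*q + 4*G*q^2 = 2*e*p*q + 2*G*(q^2 - p^2) + 2*G*(p^2+q^2)" by (simp add: algebra_simps)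
  also have "\<dots> \<le> s*(p^2+q^2) + 2*G*(p^2+q^2)" using quad by simp
  also have "\<dots> \<le> s + 2*G" using pq1 s0 G0
  proof -
    have "(s+2*G)*(p^2+q^2) \<le> (s+2*G)*1" using pq1 s0 G0 by (intro mult_left_mono) auto
    then show ?thesis by (simp add: algebra_simps)
  qed
  finally have F: "2*e*p*q + 4*G*q^2 \<le> s + 2*G" .
  have "-(2*Z*W) + 4*g*C \<le> 2*e*p*q + 4*G*q^2" using h1 h2 by linarith
  with F show ?thesis unfolding s_def by linarith
qed

lemma rate_bound:
  fixes Cb e G :: real
  assumes "0 < Cb" "Cb \<le> 1" "e > 0" "G \<ge> 0"
  shows "(2*G + sqrt(e^2+4*G^2)) * (if 4 * G\<^sup>2 \<ge> e\<^sup>2 then (1 - Cb) / (4 * sqrt 2 * G)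
      else (1 - Cb) * sqrt (e\<^sup>2 - 2 * G\<^sup>2) / (2 * e\<^sup>2)) \<le> 1 - Cb"
proof (cases "4 * G\<^sup>2 \<ge> e\<^sup>2")
  case True
  then have Gp: "G > 0" using assms
    by (cases "G = 0") auto
  have "sqrt(e^2+4*G^2) \<le> sqrt 8 * G"
    using True Gp by (intro real_le_lsqrt) (auto simp: power_mult_distrib)
  moreover have "sqrt 8 = 2 * sqrt 2"
    by (metis real_sqrt_mult real_sqrt_four mult_numeral_left_semiring_numeral num_double numeral_times_numeral)
  moreover have "sqrt 2 \<ge> 1" by simp
  ultimately have A: "sqrt(e^2+4*G^2) \<le> 2 * sqrt 2 * G" by simp
  have B: "2*G \<le> 2 * sqrt 2 * G" using \<open>sqrt 2 \<ge> 1\<close> Gp by simp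
  have M: "2*G + sqrt(e^2+4*G^2) \<le> 4 * sqrt 2 * G" using A B by linarith
  have "(2*G + sqrt(e^2+4*G^2)) * ((1 - Cb) / (4 * sqrt 2 * G)) \<le> (4 * sqrt 2 * G) * ((1 - Cb) / (4 * sqrt 2 * G))"
    using M assms by (intro mult_right_mono) auto
  also have "\<dots> = 1 - Cb" using Gp by simp
  finally show ?thesis using True by simp
next
  case False
  then have eG: "e^2 > 4*G^2" by simp
  have Ge: "2*G \<le> e" using eG assms
  proof -
    have "(2*G)^2 < e^2" using eG by (simp add: power_mult_distrib)
    then show ?thesis using assms(3) power_less_imp_less_base[of "2*G" 2 e] by simp
  qed
  have S1: "sqrt(e^2+4*G^2) \<le> e + 2*G^2/e"
    using assms by (intro real_le_lsqrt) (auto simp: power2_eq_square field_simps)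
  have M: "2*G + sqrt(e^2+4*G^2) \<le> 2*e + 2*G^2/e" using S1 Ge by linarith
  define r where "r = sqrt (e\<^sup>2 - 2 * G\<^sup>2)"
  have "2*G^2 \<le> e^2" using eG zero_le_power2[of G] by linarith
  then have r0: "r \<ge> 0" and r2: "r^2 = e^2 - 2*G^2" by (auto simp: r_def)
  have "((e^2+G^2)*r)^2 \<le> (e^3)^2"
  proof -
    have "((e^2+G^2)*r)^2 = (e^2+G^2)^2*(e^2-2*G^2)" by (simp add: power_mult_distrib r2)
    also have "\<dots> = (e^3)^2 - 3*e^2*G^4 - 2*G^6" by (simp add: eval_nat_numeral algebra_simps)
    also have "\<dots> \<le> (e^3)^2"
    proof -
      have "0 \<le> G^4" "0 \<le> G^6" by (simp_all add: zero_le_even_power)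
      moreover have "0 \<le> e^2" by simp
      ultimately have "0 \<le> e^2 * G^4" by simp
      then show ?thesis using \<open>0 \<le> G^6\<close> by linarith
    qed
    finally show ?thesis .
  qed
  hence R: "(e^2+G^2)*r \<le> e^3" using power2_le_imp_le[of "(e^2+G^2)*r" "e^3"] assms by simp
  have "(2*G + sqrt(e^2+4*G^2)) * ((1 - Cb) * r / (2 * e\<^sup>2)) \<le> (2*e + 2*G^2/e) * ((1 - Cb) * r / (2 * e\<^sup>2))"
    using M assms r0 by (intro mult_right_mono) auto
  also have "\<dots> = (1 - Cb) * ((e^2+G^2)*r / e^3)" using assms by (simp add: field_simps power2_eq_square power3_eq_cube)
  also have "\<dots> \<le> (1 - Cb) * 1" using R assms by (intro mult_left_mono) auto
  finally show ?thesis using False by (simp add: r_def)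
qed

lemma mono_deriv:
  fixes f f' :: "real \<Rightarrow> real"
  assumes "0 \<le> b" "\<And>x. 0 \<le> x \<Longrightarrow> x \<le> b \<Longrightarrow> (f has_real_derivative f' x) (at x within {0..})"
    "\<And>x. 0 \<le> x \<Longrightarrow> x \<le> b \<Longrightarrow> f' x \<ge> 0"
  shows "f 0 \<le> f b"
proof -
  have "\<exists>x\<in>{0..b}. f b - f 0 = (\<lambda>h. h * f' x) (b - 0)"
  proof (rule mvt_very_simple[OF assms(1)])
    fix x assume "0 \<le> x" "x \<le> b"
    then have "(f has_real_derivative f' x) (at x within {0..b})"
      by (rule has_field_derivative_subset[OF assms(2)]) auto
    then show "(f has_derivative (\<lambda>h. h * f' x)) (at x within {0..b})"
      by (simp add: has_field_derivative_def mult_commute_abs)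
  qed
  then obtain x where "x \<in> {0..b}" "f b - f 0 = b * f' x" by auto
  moreover have "f' x \<ge> 0" using assms(3) \<open>x \<in> {0..b}\<close> by auto
  moreover have "b * f' x \<ge> 0" using assms(1) \<open>f' x \<ge> 0\<close> by simp
  ultimately show ?thesis by linarith
qed


lemma poly_id: fixes a :: real shows "a - (1 + (a - (1-a))/2) + (1-a)*(1 + (a-(1-a))/2)^2 = - ((a-(1-a))^2*(3+(a-(1-a)))/8)"
  by (simp add: power2_eq_square field_simps)

lemma init_state:
  fixes A :: "complex^2^2"
  assumes "density A" "coherence A = 1"
  shows "(Re (A$1$2) + Re (A$2$1))^2 + (Im (A$2$1) - Im (A$1$2))^2 = 1"
    and "Re (A$1$1) - Re (A$2$2) = 0"
proof -
  show C: "(Re (A$1$2) + Re (A$2$1))^2 + (Im (A$2$1) - Im (A$1$2))^2 = 1"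
    using assms(2) unfolding coherence_def bloch_x_def bloch_y_def trace_def sigma_x_def sigma_y_def mat2_def
    by (simp add: matrix_matrix_mult_def sum_2 algebra_simps)
  have herm: "adjoint2 A = A" and psd: "\<And>v :: complex^2. 0 \<le> Re (\<Sum>i\<in>UNIV. \<Sum>j\<in>UNIV. cnj (v $ i) * A $ i $ j * v $ j)"
    and tr: "trace A = 1" using assms(1) unfolding density_def by auto
  have c: "A$2$1 = cnj (A$1$2)"
    using arg_cong[OF herm, of "\<lambda>B. B$2$1"] by (simp add: adjoint2_def)
  define a where "a = Re (A$1$1)"
  define d where "d = Re (A$2$2)"
  define br where "br = Re (A$1$2)"
  define bi where "bi = Im (A$1$2)"
  have ad: "a + d = 1" using arg_cong[OF tr, of Re] by (simp add: trace_def sum_2 a_def d_def)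
  have b4: "4*(br^2+bi^2) = 1" using C c by (simp add: br_def bi_def power2_eq_square algebra_simps)
  have form: "0 \<le> a - r*(4*(br^2+bi^2)) + d*r^2*(4*(br^2+bi^2))" for r :: real
  proof -
    have "0 \<le> Re (\<Sum>i\<in>UNIV. \<Sum>j\<in>UNIV. cnj ((\<chi> k. if k = 1 then 1 else -2*r*cnj (A$1$2)) $ i) * A $ i $ j * (\<chi> k. if k = 1 then 1 else -2*r*cnj (A$1$2)) $ j)"
      by (rule psd)
    also have "\<dots> = a - r*(4*(br^2+bi^2)) + d*r^2*(4*(br^2+bi^2))"
      by (simp add: sum_2 c a_def d_def br_def bi_def power2_eq_square algebra_simps)
    finally show ?thesis .
  qed
  have a0: "a \<ge> 0" using form[of 0] by simp
  define r where "r = 1 + (a-d)/2"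
  have "0 \<le> a - r + d*r^2" using form[of r] b4 by simp
  also have "a - r + d*r^2 = - ((a-d)^2*(3+(a-d))/8)"
  proof -
    have "d = 1 - a" using ad by simp
    then show ?thesis unfolding r_def using poly_id[of a] by simp
  qed
  finally have "(a-d)^2*(3+(a-d)) \<le> 0" by simp
  moreover have "3 + (a-d) > 0" using a0 ad by linarith
  ultimately have "(a-d)^2 \<le> 0" by (simp add: mult_le_0_iff)
  then show "Re (A$1$1) - Re (A$2$2) = 0" unfolding a_def d_def by simp
qed

lemma bloch_derivs:
  fixes \<rho> :: "real \<Rightarrow> complex^2^2" and w ex ey g :: real
  assumes d: "(\<rho> has_vector_derivative (cscale (- \<i>) (commutator (Ham w ex ey) (\<rho> t)) + g *\<^sub>R (sigma_z ** \<rho> t ** sigma_z - \<rho> t))) (at t within S)"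
  shows "((\<lambda>t. Re (\<rho> t$1$2) + Re (\<rho> t$2$1)) has_real_derivative
     (-(1+w) * (Im (\<rho> t$2$1) - Im (\<rho> t$1$2)) + ey * (Re (\<rho> t$1$1) - Re (\<rho> t$2$2)) - 2*g*(Re (\<rho> t$1$2) + Re (\<rho> t$2$1)))) (at t within S)"
   and "((\<lambda>t. Im (\<rho> t$2$1) - Im (\<rho> t$1$2)) has_real_derivative
     ((1+w) * (Re (\<rho> t$1$2) + Re (\<rho> t$2$1)) - ex * (Re (\<rho> t$1$1) - Re (\<rho> t$2$2)) - 2*g*(Im (\<rho> t$2$1) - Im (\<rho> t$1$2)))) (at t within S)"
   and "((\<lambda>t. Re (\<rho> t$1$1) - Re (\<rho> t$2$2)) has_real_derivative
     (ex * (Im (\<rho> t$2$1) - Im (\<rho> t$1$2)) - ey * (Re (\<rho> t$1$2) + Re (\<rho> t$2$1)))) (at t within S)"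
  by (rule DERIV_cong[OF DERIV_add[OF entry_deriv(1)[OF d] entry_deriv(1)[OF d]] entries(1)],
      rule DERIV_cong[OF DERIV_diff[OF entry_deriv(2)[OF d] entry_deriv(2)[OF d]] entries(2)],
      rule DERIV_cong[OF DERIV_diff[OF entry_deriv(1)[OF d] entry_deriv(1)[OF d]] entries(3)])


theorem theorem4:
  fixes Cbar eps \<omega> \<gamma>0 \<gamma> :: real
    and om ex ey dg :: "real \<Rightarrow> real"
    and \<rho> :: "real \<Rightarrow> complex^2^2"
  assumes "0 < Cbar" "Cbar \<le> 1" "eps > 0" "\<omega> \<ge> 0" "\<gamma>0 \<ge> \<gamma>" "\<gamma> \<ge> 0"
    and "\<And>t. t \<ge> 0 \<Longrightarrow> \<bar>om t\<bar> \<le> \<omega>"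
    and "\<And>t. t \<ge> 0 \<Longrightarrow> sqrt ((ex t)\<^sup>2 + (ey t)\<^sup>2) \<le> eps"
    and "\<And>t. t \<ge> 0 \<Longrightarrow> \<bar>dg t\<bar> \<le> \<gamma>"
    and "\<And>t. t \<ge> 0 \<Longrightarrow>
           (\<rho> has_vector_derivative
              (cscale (- \<i>) (commutator (Ham (om t) (ex t) (ey t)) (\<rho> t))
               + (\<gamma>0 + dg t) *\<^sub>R (sigma_z ** \<rho> t ** sigma_z - \<rho> t)))
           (at t within {0..})"
    and "density (\<rho> 0)"
    and "coherence (\<rho> 0) = 1"
  shows "\<forall>t \<in> {0 .. T_p Cbar eps \<gamma>0 \<gamma>}. \<rho> t \<in> D_p Cbar"
proof -
  define G where "G = \<gamma>0 + \<gamma>"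
  define M where "M = 2*G + sqrt(eps^2+4*G^2)"
  define X where "X t = Re (\<rho> t$1$2) + Re (\<rho> t$2$1)" for t
  define Y where "Y t = Im (\<rho> t$2$1) - Im (\<rho> t$1$2)" for t
  define Z where "Z t = Re (\<rho> t$1$1) - Re (\<rho> t$2$2)" for t
  define g where "g t = \<gamma>0 + dg t" for t
  have G0: "G \<ge> 0" using assms(5,6) by (simp add: G_def)
  have gb: "0 \<le> g t" "g t \<le> G" if "t \<ge> 0" for t
    using assms(9)[OF that] assms(5) by (auto simp: g_def G_def)
  have dX: "(X has_real_derivative (-(1 + om t) * Y t + ey t * Z t - 2*g t*X t)) (at t within {0..})"
    and dY: "(Y has_real_derivative ((1 + om t) * X t - ex t * Z t - 2*g t*Y t)) (at t within {0..})"
    and dZ: "(Z has_real_derivative (ex t * Y t - ey t * X t)) (at t within {0..})"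
    if "t \<ge> 0" for t
    using bloch_derivs[OF assms(10)[OF that]] unfolding X_def[abs_def] Y_def[abs_def] Z_def[abs_def] g_def
    by auto
  have coh: "coherence (\<rho> t) = X t ^2 + Y t ^2" for t
    unfolding coherence_def bloch_x_def bloch_y_def trace_def sigma_x_def sigma_y_def mat2_def X_def Y_def
    by (simp add: matrix_matrix_mult_def sum_2 algebra_simps)
  have C0: "X 0 ^2 + Y 0 ^2 = 1" and Z0: "Z 0 = 0"
    using init_state[OF assms(11,12)] by (auto simp: X_def Y_def Z_def)
  have Rb: "Z t ^2 + (X t ^2 + Y t ^2) \<le> 1" if "t \<ge> 0" for t
  proof -
    have "(\<lambda>s. - (X s ^2 + Y s ^2 + Z s ^2)) 0 \<le> (\<lambda>s. - (X s ^2 + Y s ^2 + Z s ^2)) t"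
    proof (rule mono_deriv[OF that])
      fix s :: real assume s: "0 \<le> s" "s \<le> t"
      have "((\<lambda>s. - (X s * X s + Y s * Y s + Z s * Z s)) has_real_derivative 4 * g s * (X s^2 + Y s^2)) (at s within {0..})"
        by (rule DERIV_cong[OF DERIV_minus[OF DERIV_add[OF DERIV_add[OF DERIV_mult[OF dX dX] DERIV_mult[OF dY dY]] DERIV_mult[OF dZ dZ]]]])
           (use s in \<open>simp_all add: power2_eq_square algebra_simps\<close>)
      then show "((\<lambda>s. - (X s ^2 + Y s ^2 + Z s ^2)) has_real_derivative 4 * g s * (X s^2 + Y s^2)) (at s within {0..})"
        by (simp add: power2_eq_square)
      show "0 \<le> 4 * g s * (X s^2 + Y s^2)" using gb[of s] s by simp
    qed
    then show ?thesis using C0 Z0 by simp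
  qed
  have main: "X t ^2 + Y t ^2 \<ge> 1 - M * t" if "t \<ge> 0" for t
  proof -
    have "(\<lambda>s. X s ^2 + Y s ^2 + M * s) 0 \<le> (\<lambda>s. X s ^2 + Y s ^2 + M * s) t"
    proof (rule mono_deriv[OF that])
      fix s :: real assume s: "0 \<le> s" "s \<le> t"
      define W where "W = ey s * X s - ex s * Y s"
      have "((\<lambda>s. X s * X s + Y s * Y s + M * s) has_real_derivative 2 * Z s * W - 4 * g s * (X s^2 + Y s^2) + M) (at s within {0..})"
        by (rule DERIV_cong[OF DERIV_add[OF DERIV_add[OF DERIV_mult[OF dX dX] DERIV_mult[OF dY dY]] DERIV_cmult[OF DERIV_ident]]])
           (use s in \<open>simp_all add: W_def power2_eq_square algebra_simps\<close>)
      then show "((\<lambda>s. X s ^2 + Y s ^2 + M * s) has_real_derivative 2 * Z s * W - 4 * g s * (X s^2 + Y s^2) + M) (at s within {0..})"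
        by (simp add: power2_eq_square)
      have e2: "(ex s)^2 + (ey s)^2 \<le> eps^2" using sqrt_le_D[OF assms(8)[OF s(1)]] .
      have "W^2 \<le> ((ex s)^2 + (ey s)^2) * (X s^2 + Y s^2)"
      proof -
        have "((ex s)^2 + (ey s)^2) * (X s^2 + Y s^2) = W^2 + (ex s * X s + ey s * Y s)^2"
          by (simp add: W_def power2_eq_square algebra_simps)
        then show ?thesis by simp
      qed
      also have "\<dots> \<le> eps^2 * (X s^2 + Y s^2)" using e2 by (intro mult_right_mono) auto
      finally have W2: "W^2 \<le> eps^2 * (X s^2 + Y s^2)" .
      have "2 * Z s * W - 4 * g s * (X s^2 + Y s^2) \<ge> -(2*G + sqrt(eps^2+4*G^2))"
        by (rule key_ineq[OF Rb[OF s(1)] W2]) (use gb[of s] s assms(3) in auto)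
      then show "0 \<le> 2 * Z s * W - 4 * g s * (X s^2 + Y s^2) + M" unfolding M_def by linarith
    qed
    then show ?thesis using C0 by simp
  qed
  have MT: "M * T_p Cbar eps \<gamma>0 \<gamma> \<le> 1 - Cbar"
    using rate_bound[OF assms(1,2,3) G0] unfolding M_def T_p_def G_def by simp
  have M0: "M \<ge> 0" using G0 by (simp add: M_def)
  show ?thesis
  proof
    fix t assume t: "t \<in> {0 .. T_p Cbar eps \<gamma>0 \<gamma>}"
    then have "M * t \<le> M * T_p Cbar eps \<gamma>0 \<gamma>" using M0 by (intro mult_left_mono) auto
    then have "X t ^2 + Y t ^2 \<ge> Cbar" using main[of t] t MT by auto
    then show "\<rho> t \<in> D_p Cbar" by (simp add: D_p_def coh)
  qed
qed

end
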